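(* Consider MDVI$(\alpha,K,M)$ with any $\alpha\in[0,1)$ and positive integers $K,M$ on an MDP as in the context, and let $\delta\in(0,1)$. Let $\mathcal{E}_1$ be the event that $\|E_k\|_\infty < 3H\sqrt{A_\infty \iota_1/M}$ for all $k\in\{1,\dots,K\}$. Then $\mathbb{P}(\mathcal{E}_1^c)\leq \delta/4$.
   Context: MDP: finite state set $\mathcal{X}$, finite action set $\mathcal{A}$, discount $\gamma\in[0,1)$, reward $r\in[-1,1]^{\mathcal{X}\times\mathcal{A}}$, transition kernel $P(y|x,a)$, $H=1/(1-\gamma)$, $(Pv)(x,a)=\sum_y P(y|x,a)v(y)$. MDVI$(\alpha,K,M)$: $s_0 = 0$, $w_0=w_{-1}=0$; for $k=0,\dots,K-1$: $v_k = w_k-\alpha w_{k-1}$; for each $(x,a)$, independent samples $y_{k,m,x,a}\sim P(\cdot|x,a)$, $m\in[M]$; $q_{k+1}(x,a) = r(x,a)+\frac{\gamma}{M}\sum_m v_k(y_{k,m,x,a})$; $s_{k+1}=q_{k+1}+\alpha s_k$; $w_{k+1}(x)=\max_a s_{k+1}(x,a)$. Notation: $\widehat P_k v(x,a) = \frac1M\sum_m v(y_{k,m,x,a})$; $\varepsilon_k = \gamma\widehat P_{k-1}v_{k-1} - \gamma P v_{k-1}$ for $k\in[K]$; $E_k = \sum_{j=1}^k\alpha^{k-j}\varepsilon_j$; $A_\infty = 1/(1-\alpha)$; $\iota_1 = \log(8K|\mathcal{X}||\mathcal{A}|/\delta)$. *)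

theory Defs
  imports "HOL-Probability.Probability"
begin

text \<open>A sample outcome: for each iteration k, sample index m, state x and action a,
  the sampled next state y_{k,m,x,a}.\<close>
type_synonym ('x,'a) sample = "nat \<times> nat \<times> 'x \<times> 'a \<Rightarrow> 'x"

text \<open>Joint law of all samples y_{k,m,x,a} (k < K, m < M): independent, y_{k,m,x,a} ~ P(.|x,a).
  Indices m are 0-based ({..<M}), k ranges over 0..K-1.\<close>
definition sample_pmf :: "('x::finite \<Rightarrow> 'a::finite \<Rightarrow> 'x pmf) \<Rightarrow> nat \<Rightarrow> nat \<Rightarrow> ('x,'a) sample pmf" where
  "sample_pmf P K M = Pi_pmf ({..<K} \<times> {..<M} \<times> UNIV \<times> UNIV) undefined (\<lambda>(k,m,x,a). P x a)"

text \<open>MDVI state after k iterations: (s_k, w_k, w_{k-1}).\<close>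
fun mdvi_state :: "real \<Rightarrow> real \<Rightarrow> ('x \<Rightarrow> 'a::finite \<Rightarrow> real) \<Rightarrow> nat \<Rightarrow> ('x,'a) sample \<Rightarrow> nat
      \<Rightarrow> ('x \<Rightarrow> 'a \<Rightarrow> real) \<times> ('x \<Rightarrow> real) \<times> ('x \<Rightarrow> real)" where
  "mdvi_state \<alpha> \<gamma> r M \<omega> 0 = ((\<lambda>_ _. 0), (\<lambda>_. 0), (\<lambda>_. 0))"
| "mdvi_state \<alpha> \<gamma> r M \<omega> (Suc k) =
     (let (s, w, wp) = mdvi_state \<alpha> \<gamma> r M \<omega> k;
          v = (\<lambda>y. w y - \<alpha> * wp y);
          q = (\<lambda>x a. r x a + \<gamma> / real M * (\<Sum>m<M. v (\<omega> (k, m, x, a))));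
          s' = (\<lambda>x a. q x a + \<alpha> * s x a)
      in (s', (\<lambda>x. Max (range (s' x))), w))"

definition mdvi_v :: "real \<Rightarrow> real \<Rightarrow> ('x \<Rightarrow> 'a::finite \<Rightarrow> real) \<Rightarrow> nat \<Rightarrow> ('x,'a) sample \<Rightarrow> nat \<Rightarrow> 'x \<Rightarrow> real" where
  "mdvi_v \<alpha> \<gamma> r M \<omega> k =
     (let (s, w, wp) = mdvi_state \<alpha> \<gamma> r M \<omega> k in (\<lambda>y. w y - \<alpha> * wp y))"

definition hatP :: "nat \<Rightarrow> ('x,'a) sample \<Rightarrow> nat \<Rightarrow> ('x \<Rightarrow> real) \<Rightarrow> 'x \<Rightarrow> 'a \<Rightarrow> real" where
  "hatP M \<omega> k v x a = (1 / real M) * (\<Sum>m<M. v (\<omega> (k, m, x, a)))"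

definition expP :: "('x::finite \<Rightarrow> 'a \<Rightarrow> 'x pmf) \<Rightarrow> ('x \<Rightarrow> real) \<Rightarrow> 'x \<Rightarrow> 'a \<Rightarrow> real" where
  "expP P v x a = (\<Sum>y\<in>UNIV. pmf (P x a) y * v y)"

text \<open>\<epsilon>_k = \<gamma> \<widehat>P_{k-1} v_{k-1} - \<gamma> P v_{k-1}  (meaningful for k \<ge> 1)\<close>
definition mdvi_eps :: "real \<Rightarrow> real \<Rightarrow> ('x::finite \<Rightarrow> 'a::finite \<Rightarrow> 'x pmf) \<Rightarrow> ('x \<Rightarrow> 'a \<Rightarrow> real) \<Rightarrow> nat
      \<Rightarrow> ('x,'a) sample \<Rightarrow> nat \<Rightarrow> 'x \<Rightarrow> 'a \<Rightarrow> real" where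
  "mdvi_eps \<alpha> \<gamma> P r M \<omega> k x a =
     \<gamma> * hatP M \<omega> (k - 1) (mdvi_v \<alpha> \<gamma> r M \<omega> (k - 1)) x a
     - \<gamma> * expP P (mdvi_v \<alpha> \<gamma> r M \<omega> (k - 1)) x a"

definition mdvi_E :: "real \<Rightarrow> real \<Rightarrow> ('x::finite \<Rightarrow> 'a::finite \<Rightarrow> 'x pmf) \<Rightarrow> ('x \<Rightarrow> 'a \<Rightarrow> real) \<Rightarrow> nat
      \<Rightarrow> ('x,'a) sample \<Rightarrow> nat \<Rightarrow> 'x \<Rightarrow> 'a \<Rightarrow> real" where
  "mdvi_E \<alpha> \<gamma> P r M \<omega> k x a = (\<Sum>j\<in>{1..k}. \<alpha> ^ (k - j) * mdvi_eps \<alpha> \<gamma> P r M \<omega> j x a)"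

definition supnorm :: "('x::finite \<Rightarrow> 'a::finite \<Rightarrow> real) \<Rightarrow> real" where
  "supnorm f = Max (range (\<lambda>(x, a). \<bar>f x a\<bar>))"

end

theory Submission imports Defs begin

lemma max_diff_bound:
  fixes q s :: "'a::finite \<Rightarrow> real"
  assumes "\<And>a. \<bar>q a\<bar> \<le> H" "0 \<le> \<alpha>"
  shows "\<bar>Max (range (\<lambda>a. q a + \<alpha> * s a)) - \<alpha> * Max (range s)\<bar> \<le> H"
proof -
  have up: "Max (range (\<lambda>a. q a + \<alpha> * s a)) \<le> H + \<alpha> * Max (range s)"
  proof (subst Max_le_iff, simp_all, intro allI)
    fix a
    have "s a \<le> Max (range s)" by simp
    hence "\<alpha> * s a \<le> \<alpha> * Max (range s)" using assms(2) by (simp add: mult_left_mono)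
    thus "q a + \<alpha> * s a \<le> H + \<alpha> * Max (range s)" using assms(1)[of a] by linarith
  qed
  have "Max (range s) \<in> range s" by (rule Max_in) auto
  then obtain a0 where a0: "s a0 = Max (range s)" by (metis rangeE)
  have "q a0 + \<alpha> * s a0 \<le> Max (range (\<lambda>a. q a + \<alpha> * s a))" by simp
  hence "-H + \<alpha> * s a0 \<le> Max (range (\<lambda>a. q a + \<alpha> * s a))"
    using assms(1)[of a0] by linarith
  hence "-H + \<alpha> * Max (range s) \<le> Max (range (\<lambda>a. q a + \<alpha> * s a))"
    by (simp only: a0)
  thus ?thesis using up by linarith
qed

lemma state_inv:
  fixes r :: "'x \<Rightarrow> 'a::finite \<Rightarrow> real"
  assumes "0 \<le> \<gamma>" "\<gamma> < 1" "\<And>x a. \<bar>r x a\<bar> \<le> 1" "0 \<le> \<alpha>" "0 < M"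
  shows "(\<forall>y. fst (snd (mdvi_state \<alpha> \<gamma> r M \<omega> k)) y = Max (range (fst (mdvi_state \<alpha> \<gamma> r M \<omega> k) y)))
       \<and> (\<forall>y. \<bar>fst (snd (mdvi_state \<alpha> \<gamma> r M \<omega> k)) y - \<alpha> * snd (snd (mdvi_state \<alpha> \<gamma> r M \<omega> k)) y\<bar> \<le> 1 / (1 - \<gamma>))"
proof (induction k)
  case 0
  then show ?case using assms by simp
next
  case (Suc k)
  obtain s w wp where st: "mdvi_state \<alpha> \<gamma> r M \<omega> k = (s, w, wp)" by (metis prod.exhaust)
  define H where "H = 1 / (1 - \<gamma>)"
  have H1: "1 + \<gamma> * H = H" using assms(2) by (simp add: H_def field_simps)
  have Hpos: "0 \<le> H" using assms(2) by (simp add: H_def)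
  define v where "v = (\<lambda>y. w y - \<alpha> * wp y)"
  have vb: "\<bar>v y\<bar> \<le> H" for y using Suc.IH unfolding st fst_conv snd_conv v_def H_def by blast
  have wmax: "w y = Max (range (s y))" for y using Suc.IH unfolding st fst_conv snd_conv by blast
  define q where "q = (\<lambda>x a. r x a + \<gamma> / real M * (\<Sum>m<M. v (\<omega> (k, m, x, a))))"
  have qb: "\<bar>q x a\<bar> \<le> H" for x a
  proof -
    have "\<bar>\<Sum>m<M. v (\<omega> (k, m, x, a))\<bar> \<le> (\<Sum>m<M. \<bar>v (\<omega> (k, m, x, a))\<bar>)" by (rule sum_abs)
    also have "\<dots> \<le> (\<Sum>m<M. H)" by (intro sum_mono vb)
    finally have "\<bar>\<Sum>m<M. v (\<omega> (k, m, x, a))\<bar> \<le> real M * H" by simp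
    hence "\<gamma> * \<bar>\<Sum>m<M. v (\<omega> (k, m, x, a))\<bar> \<le> \<gamma> * (real M * H)"
      by (rule mult_left_mono) (use assms in simp)
    hence "\<bar>\<gamma> / real M * (\<Sum>m<M. v (\<omega> (k, m, x, a)))\<bar> \<le> \<gamma> * H"
      using assms(1,5) by (simp add: abs_mult field_simps)
    thus ?thesis using assms(3)[of x a] H1 unfolding q_def by linarith
  qed
  have st': "mdvi_state \<alpha> \<gamma> r M \<omega> (Suc k) =
     ((\<lambda>x a. q x a + \<alpha> * s x a), (\<lambda>x. Max (range (\<lambda>a. q x a + \<alpha> * s x a))), w)"
    by (simp add: st q_def v_def Let_def)
  have mb: "\<bar>Max (range (\<lambda>a. q y a + \<alpha> * s y a)) - \<alpha> * Max (range (s y))\<bar> \<le> H" for y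
    by (rule max_diff_bound) (use qb assms(4) in auto)
  show ?case unfolding st' using mb wmax by (simp add: H_def)
qed

lemma v_bound:
  fixes r :: "'x \<Rightarrow> 'a::finite \<Rightarrow> real"
  assumes "0 \<le> \<gamma>" "\<gamma> < 1" "\<And>x a. \<bar>r x a\<bar> \<le> 1" "0 \<le> \<alpha>" "0 < M"
  shows "\<bar>mdvi_v \<alpha> \<gamma> r M \<omega> k y\<bar> \<le> 1 / (1 - \<gamma>)"
  using state_inv[where r=r and \<omega>=\<omega> and k=k, OF assms] unfolding mdvi_v_def
  by (auto simp: case_prod_beta)

lemma state_local:
  assumes "\<And>j m y b. j < k \<Longrightarrow> m < M \<Longrightarrow> \<omega> (j, m, y, b) = \<omega>' (j, m, y, b)"
  shows "mdvi_state \<alpha> \<gamma> r M \<omega> k = mdvi_state \<alpha> \<gamma> r M \<omega>' k"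
  using assms
proof (induction k)
  case 0
  then show ?case by simp
next
  case (Suc k)
  have e: "mdvi_state \<alpha> \<gamma> r M \<omega> k = mdvi_state \<alpha> \<gamma> r M \<omega>' k" using Suc by auto
  have e2: "(\<Sum>m<M. f (\<omega> (k, m, x, a))) = (\<Sum>m<M. f (\<omega>' (k, m, x, a)))" for f x a
    using Suc.prems by (intro sum.cong) auto
  show ?case by (simp add: e e2 Let_def case_prod_beta)
qed

lemma v_local:
  assumes "\<And>j m y b. j < k \<Longrightarrow> m < M \<Longrightarrow> \<omega> (j, m, y, b) = \<omega>' (j, m, y, b)"
  shows "mdvi_v \<alpha> \<gamma> r M \<omega> k = mdvi_v \<alpha> \<gamma> r M \<omega>' k"
proof -
  have "mdvi_state \<alpha> \<gamma> r M \<omega> k = mdvi_state \<alpha> \<gamma> r M \<omega>' k" by (rule state_local) (rule assms)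
  thus ?thesis unfolding mdvi_v_def by simp
qed

lemma eps_local:
  assumes "1 \<le> k" "\<And>j m y b. j < k \<Longrightarrow> m < M \<Longrightarrow> \<omega> (j, m, y, b) = \<omega>' (j, m, y, b)"
  shows "mdvi_eps \<alpha> \<gamma> P r M \<omega> k x a = mdvi_eps \<alpha> \<gamma> P r M \<omega>' k x a"
proof -
  have v: "mdvi_v \<alpha> \<gamma> r M \<omega> (k - 1) = mdvi_v \<alpha> \<gamma> r M \<omega>' (k - 1)"
    using assms by (intro v_local) auto
  have h: "hatP M \<omega> (k - 1) f x a = hatP M \<omega>' (k - 1) f x a" for f
    unfolding hatP_def using assms by (intro arg_cong[where f="\<lambda>t. _ * t"] sum.cong) auto
  show ?thesis unfolding mdvi_eps_def v h ..
qed



lemma hoeff_pos: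
  fixes q :: "'b pmf" and h :: "'b \<Rightarrow> real"
  assumes "\<And>y. \<bar>h y\<bar> \<le> H" "c > 0"
  shows "(\<integral>\<^sup>+y. ennreal (exp (c * (h y - measure_pmf.expectation q h))) \<partial>q) \<le> ennreal (exp (c\<^sup>2 * (2*H)\<^sup>2 / 8))"
proof -
  interpret interval_bounded_random_variable "measure_pmf q" h "-H" H
  proof unfold_locales
    show "h \<in> borel_measurable (measure_pmf q)" by simp
    show "AE x in measure_pmf q. h x \<in> {- H..H}"
    proof (intro AE_I2)
      fix x show "h x \<in> {-H..H}" using assms(1)[of x] by (auto simp: abs_le_iff)
    qed
  qed
  have "H - - H = 2 * H" by simp
  thus ?thesis using Hoeffdings_lemma_nn_integral[OF assms(2)] by simp
qed

lemma hoeff_pmf: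
  fixes q :: "'b pmf" and h :: "'b \<Rightarrow> real"
  assumes "\<And>y. \<bar>h y\<bar> \<le> H"
  shows "(\<integral>\<^sup>+y. ennreal (exp (c * (h y - measure_pmf.expectation q h))) \<partial>q) \<le> ennreal (exp (c\<^sup>2 * (2*H)\<^sup>2 / 8))"
proof (cases "c > 0")
  case True
  then show ?thesis by (intro hoeff_pos[where h=h and H=H and c=c and q=q]) (use assms in auto)
next
  case False
  show ?thesis
  proof (cases "c = 0")
    case True
    then show ?thesis by (simp add: measure_pmf.emeasure_space_1)
  next
    case False
    with \<open>\<not> c > 0\<close> have c: "-c > 0" by simp
    have b: "\<bar>- h y\<bar> \<le> H" for y using assms[of y] by simp
    have e: "c * (h y - measure_pmf.expectation q h) = (-c) * ((- h y) - measure_pmf.expectation q (\<lambda>y. - h y))" for y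
      by (simp add: algebra_simps)
    show ?thesis unfolding e using hoeff_pos[where h="\<lambda>y. - h y" and H=H and c="-c" and q=q] b c by simp
  qed
qed

lemma expP_eq: "expP P h x a = measure_pmf.expectation (P x a) h"
  unfolding expP_def
  by (subst integral_measure_pmf_real[where A=UNIV]) (auto simp: mult.commute)

lemma inner:
  fixes P :: "'x::finite \<Rightarrow> 'a::finite \<Rightarrow> 'x pmf" and h :: "'x \<Rightarrow> real"
  assumes "\<And>y. \<bar>h y\<bar> \<le> H"
  shows "(\<integral>\<^sup>+g. ennreal (exp (c * (\<Sum>m<M. (h (g (n,m,x,a)) - expP P h x a))))
           \<partial>Pi_pmf ({n} \<times> {..<M} \<times> (UNIV::'x set) \<times> (UNIV::'a set)) undefined (\<lambda>(k,m,x,a). P x a))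
         \<le> ennreal (exp (real M * (c\<^sup>2 * (2*H)\<^sup>2 / 8)))"
proof -
  define B where "B = {n} \<times> {..<M} \<times> (UNIV::'x set) \<times> (UNIV::'a set)"
  define J where "J = (\<lambda>m. (n,m,x,a)) ` {..<M}"
  define E where "E = expP P h x a"
  define e where "e = (\<lambda>y. exp (c * (h y - E)))"
  define F where "F = (\<lambda>i y. if i \<in> J then ennreal (e y) else 1)"
  have finB: "finite B" unfolding B_def by simp
  have JB: "J \<subseteq> B" unfolding J_def B_def by auto
  have inj: "inj_on (\<lambda>m. (n,m,x,a)) {..<M}" by (auto simp: inj_on_def)
  have cardJ: "card J = M" unfolding J_def using inj by (simp add: card_image)
  have pw: "ennreal (exp (c * (\<Sum>m<M. (h (g (n,m,x,a)) - E)))) = (\<Prod>i\<in>B. F i (g i))" for g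
  proof -
    have "(\<Prod>i\<in>B. F i (g i)) = (\<Prod>i\<in>B \<inter> J. ennreal (e (g i)))"
      unfolding F_def by (subst prod.inter_restrict[OF finB]) simp
    also have "B \<inter> J = J" using JB by blast
    also have "(\<Prod>i\<in>J. ennreal (e (g i))) = (\<Prod>m<M. ennreal (e (g (n,m,x,a))))"
      unfolding J_def by (subst prod.reindex[OF inj]) simp
    also have "\<dots> = ennreal (\<Prod>m<M. e (g (n,m,x,a)))"
      by (rule prod_ennreal) (simp add: e_def)
    also have "(\<Prod>m<M. e (g (n,m,x,a))) = exp (c * (\<Sum>m<M. (h (g (n,m,x,a)) - E)))"
      unfolding e_def by (simp add: exp_sum sum_distrib_left)
    finally show ?thesis ..
  qed
  have "(\<integral>\<^sup>+g. ennreal (exp (c * (\<Sum>m<M. (h (g (n,m,x,a)) - E)))) \<partial>Pi_pmf B undefined (\<lambda>(k,m,x,a). P x a))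
      = (\<integral>\<^sup>+g. (\<Prod>i\<in>B. F i (g i)) \<partial>Pi_pmf B undefined (\<lambda>(k,m,x,a). P x a))"
    by (simp add: pw)
  also have "\<dots> = (\<Prod>i\<in>B. nn_integral ((\<lambda>(k,m,x,a). P x a) i) (F i))"
    by (rule nn_integral_prod_Pi_pmf[OF finB])
  also have "\<dots> \<le> (\<Prod>i\<in>B. (if i \<in> J then ennreal (exp (c\<^sup>2 * (2*H)\<^sup>2 / 8)) else 1))"
  proof (intro prod_mono_ennreal)
    fix i assume "i \<in> B"
    show "nn_integral ((\<lambda>(k,m,x,a). P x a) i) (F i) \<le> (if i \<in> J then ennreal (exp (c\<^sup>2 * (2*H)\<^sup>2 / 8)) else 1)"
    proof (cases "i \<in> J")
      case True
      then obtain m where i: "i = (n,m,x,a)" unfolding J_def by auto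
      have "nn_integral (P x a) (\<lambda>y. ennreal (e y)) \<le> ennreal (exp (c\<^sup>2 * (2*H)\<^sup>2 / 8))"
        unfolding e_def E_def expP_eq by (rule hoeff_pmf[OF assms])
      then show ?thesis using True i by (simp add: F_def)
    next
      case False
      then show ?thesis by (simp add: F_def measure_pmf.emeasure_space_1 case_prod_beta)
    qed
  qed
  also have "\<dots> = (\<Prod>i\<in>B \<inter> J. ennreal (exp (c\<^sup>2 * (2*H)\<^sup>2 / 8)))"
    by (subst prod.inter_restrict[OF finB]) simp
  also have "\<dots> = ennreal (exp (c\<^sup>2 * (2*H)\<^sup>2 / 8)) ^ M"
    using JB cardJ by (simp add: Int_absorb1)
  also have "\<dots> = ennreal (exp (c\<^sup>2 * (2*H)\<^sup>2 / 8) ^ M)"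
    by (simp add: ennreal_power)
  also have "exp (c\<^sup>2 * (2*H)\<^sup>2 / 8) ^ M = exp (real M * (c\<^sup>2 * (2*H)\<^sup>2 / 8))"
    by (simp only: exp_of_nat_mult)
  finally show ?thesis unfolding B_def E_def .
qed


lemma mgf_bound:
  fixes P :: "'x::finite \<Rightarrow> 'a::finite \<Rightarrow> 'x pmf" and r :: "'x \<Rightarrow> 'a \<Rightarrow> real"
  assumes "0 \<le> \<gamma>" "\<gamma> < 1" "\<And>x a. \<bar>r x a\<bar> \<le> 1" "0 \<le> \<alpha>" "0 < M"
  shows "(\<integral>\<^sup>+\<omega>. ennreal (exp (l * (\<Sum>j\<in>{1..n}. \<beta> j * mdvi_eps \<alpha> \<gamma> P r M \<omega> j x a)))
            \<partial>Pi_pmf ({..<n} \<times> {..<M} \<times> (UNIV::'x set) \<times> (UNIV::'a set)) undefined (\<lambda>(k,m,x,a). P x a))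
         \<le> ennreal (exp (l\<^sup>2 * \<gamma>\<^sup>2 * (1 / (1 - \<gamma>))\<^sup>2 / (2 * real M) * (\<Sum>j\<in>{1..n}. (\<beta> j)\<^sup>2)))"
proof (induction n)
  case 0
  then show ?case by (simp add: measure_pmf.emeasure_space_1)
next
  case (Suc n)
  define H where "H = 1 / (1 - \<gamma>)"
  define p where "p = (\<lambda>(k::nat,m::nat,x::'x,a::'a). P x a)"
  define D where "D = {..<n} \<times> {..<M} \<times> (UNIV::'x set) \<times> (UNIV::'a set)"
  define B where "B = {n} \<times> {..<M} \<times> (UNIV::'x set) \<times> (UNIV::'a set)"
  define S where "S = (\<lambda>\<omega>. \<Sum>j\<in>{1..n}. \<beta> j * mdvi_eps \<alpha> \<gamma> P r M \<omega> j x a)"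
  define C where "C = l\<^sup>2 * \<gamma>\<^sup>2 * H\<^sup>2 / (2 * real M)"
  define mg where "mg = (\<lambda>(f::('x,'a) sample) (g::('x,'a) sample) i. if i \<in> D then f i else g i)"
  have DB: "{..<Suc n} \<times> {..<M} \<times> (UNIV::'x set) \<times> (UNIV::'a set) = D \<union> B"
    unfolding D_def B_def by auto
  have un: "Pi_pmf (D \<union> B) undefined p = map_pmf (\<lambda>(f,g). mg f g) (pair_pmf (Pi_pmf D undefined p) (Pi_pmf B undefined p))"
    unfolding mg_def by (rule Pi_pmf_union) (auto simp: D_def B_def)
  have key: "exp (l * (\<Sum>j\<in>{1..Suc n}. \<beta> j * mdvi_eps \<alpha> \<gamma> P r M (mg f g) j x a))
      = exp (l * S f) * exp ((l * \<beta> (Suc n) * \<gamma> / real M) *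
           (\<Sum>m<M. (mdvi_v \<alpha> \<gamma> r M f n (g (n,m,x,a)) - expP P (mdvi_v \<alpha> \<gamma> r M f n) x a)))" for f g
  proof -
    have agree: "mg f g (j, m, y, b) = f (j, m, y, b)" if "j < n" "m < M" for j m y b
      using that by (simp add: mg_def D_def)
    have e1: "mdvi_eps \<alpha> \<gamma> P r M (mg f g) j x a = mdvi_eps \<alpha> \<gamma> P r M f j x a" if "j \<in> {1..n}" for j
      using that by (intro eps_local) (auto intro!: agree)
    have v: "mdvi_v \<alpha> \<gamma> r M (mg f g) n = mdvi_v \<alpha> \<gamma> r M f n"
      by (intro v_local agree)
    have gB: "mg f g (n, m, y, b) = g (n, m, y, b)" for m y b
      by (simp add: mg_def D_def)
    define h where "h = mdvi_v \<alpha> \<gamma> r M f n"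
    have e2: "mdvi_eps \<alpha> \<gamma> P r M (mg f g) (Suc n) x a
        = \<gamma> / real M * (\<Sum>m<M. (h (g (n,m,x,a)) - expP P h x a))"
      unfolding mdvi_eps_def hatP_def using assms(5)
      by (simp add: v gB h_def sum_subtractf field_simps)
    have "(\<Sum>j\<in>{1..Suc n}. \<beta> j * mdvi_eps \<alpha> \<gamma> P r M (mg f g) j x a)
        = S f + \<beta> (Suc n) * (\<gamma> / real M * (\<Sum>m<M. (h (g (n,m,x,a)) - expP P h x a)))"
      unfolding S_def by (simp add: e1 e2)
    then show ?thesis unfolding h_def
      by (simp add: exp_add[symmetric] algebra_simps)
  qed
  have inner_b: "(\<integral>\<^sup>+g. ennreal (exp ((l * \<beta> (Suc n) * \<gamma> / real M) *
           (\<Sum>m<M. (mdvi_v \<alpha> \<gamma> r M f n (g (n,m,x,a)) - expP P (mdvi_v \<alpha> \<gamma> r M f n) x a)))) \<partial>Pi_pmf B undefined p)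
       \<le> ennreal (exp (C * (\<beta> (Suc n))\<^sup>2))" for f
  proof -
    have "(\<integral>\<^sup>+g. ennreal (exp ((l * \<beta> (Suc n) * \<gamma> / real M) *
           (\<Sum>m<M. (mdvi_v \<alpha> \<gamma> r M f n (g (n,m,x,a)) - expP P (mdvi_v \<alpha> \<gamma> r M f n) x a)))) \<partial>Pi_pmf B undefined p)
       \<le> ennreal (exp (real M * ((l * \<beta> (Suc n) * \<gamma> / real M)\<^sup>2 * (2*H)\<^sup>2 / 8)))"
      unfolding B_def p_def by (rule inner) (use v_bound[OF assms] in \<open>simp add: H_def\<close>)
    also have "real M * ((l * \<beta> (Suc n) * \<gamma> / real M)\<^sup>2 * (2*H)\<^sup>2 / 8) = C * (\<beta> (Suc n))\<^sup>2"
      using assms(5) by (simp add: C_def power2_eq_square field_simps)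
    finally show ?thesis .
  qed
  have "(\<integral>\<^sup>+\<omega>. ennreal (exp (l * (\<Sum>j\<in>{1..Suc n}. \<beta> j * mdvi_eps \<alpha> \<gamma> P r M \<omega> j x a)))
            \<partial>Pi_pmf (D \<union> B) undefined p)
     = (\<integral>\<^sup>+f. \<integral>\<^sup>+g. ennreal (exp (l * S f)) * ennreal (exp ((l * \<beta> (Suc n) * \<gamma> / real M) *
           (\<Sum>m<M. (mdvi_v \<alpha> \<gamma> r M f n (g (n,m,x,a)) - expP P (mdvi_v \<alpha> \<gamma> r M f n) x a))))
            \<partial>Pi_pmf B undefined p \<partial>Pi_pmf D undefined p)"
    unfolding un nn_integral_map_pmf nn_integral_pair_pmf' case_prod_conv key
    by (intro nn_integral_cong) (simp add: ennreal_mult)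
  also have "\<dots> = (\<integral>\<^sup>+f. ennreal (exp (l * S f)) * \<integral>\<^sup>+g. ennreal (exp ((l * \<beta> (Suc n) * \<gamma> / real M) *
           (\<Sum>m<M. (mdvi_v \<alpha> \<gamma> r M f n (g (n,m,x,a)) - expP P (mdvi_v \<alpha> \<gamma> r M f n) x a))))
            \<partial>Pi_pmf B undefined p \<partial>Pi_pmf D undefined p)"
    by (simp add: nn_integral_cmult)
  also have "\<dots> \<le> (\<integral>\<^sup>+f. ennreal (exp (l * S f)) * ennreal (exp (C * (\<beta> (Suc n))\<^sup>2)) \<partial>Pi_pmf D undefined p)"
    by (intro nn_integral_mono mult_left_mono inner_b) auto
  also have "\<dots> = (\<integral>\<^sup>+f. ennreal (exp (l * S f)) \<partial>Pi_pmf D undefined p) * ennreal (exp (C * (\<beta> (Suc n))\<^sup>2))"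
    by (simp add: nn_integral_multc)
  also have "\<dots> \<le> ennreal (exp (C * (\<Sum>j\<in>{1..n}. (\<beta> j)\<^sup>2))) * ennreal (exp (C * (\<beta> (Suc n))\<^sup>2))"
    by (intro mult_right_mono) (use Suc.IH in \<open>simp_all add: S_def D_def p_def C_def H_def\<close>)
  also have "\<dots> = ennreal (exp (C * (\<Sum>j\<in>{1..Suc n}. (\<beta> j)\<^sup>2)))"
    by (simp add: ennreal_mult[symmetric] exp_add[symmetric] distrib_left)
  finally show ?case unfolding DB p_def C_def H_def .
qed


lemma geo_sq_bound:
  fixes \<alpha> :: real
  assumes "0 \<le> \<alpha>" "\<alpha> < 1"
  shows "(\<Sum>j\<in>{1..k}. (\<alpha> ^ (k - j))\<^sup>2) \<le> 1 / (1 - \<alpha>)"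
proof -
  have S: "(\<Sum>j\<in>{1..k}. \<alpha> ^ (k - j)) \<le> 1 / (1 - \<alpha>)" for k
  proof (induction k)
    case 0
    then show ?case using assms by simp
  next
    case (Suc k)
    have "(\<Sum>j\<in>{1..Suc k}. \<alpha> ^ (Suc k - j)) = (\<Sum>j\<in>{1..k}. \<alpha> ^ (Suc k - j)) + 1"
      by (simp add: sum.cl_ivl_Suc)
    also have "(\<Sum>j\<in>{1..k}. \<alpha> ^ (Suc k - j)) = \<alpha> * (\<Sum>j\<in>{1..k}. \<alpha> ^ (k - j))"
      unfolding sum_distrib_left by (intro sum.cong refl) (simp add: Suc_diff_le)
    also have "\<alpha> * (\<Sum>j\<in>{1..k}. \<alpha> ^ (k - j)) + 1 \<le> \<alpha> * (1 / (1 - \<alpha>)) + 1"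
      using mult_left_mono[OF Suc.IH assms(1)] by simp
    also have "\<alpha> * (1 / (1 - \<alpha>)) + 1 = 1 / (1 - \<alpha>)" using assms by (simp add: field_simps)
    finally show ?case .
  qed
  have "(\<Sum>j\<in>{1..k}. (\<alpha> ^ (k - j))\<^sup>2) \<le> (\<Sum>j\<in>{1..k}. \<alpha> ^ (k - j))"
  proof (intro sum_mono)
    fix j
    have "\<alpha> ^ (k - j) \<le> 1" using assms by (simp add: power_le_one)
    hence "\<alpha> ^ (k - j) * \<alpha> ^ (k - j) \<le> 1 * \<alpha> ^ (k - j)"
      using assms by (intro mult_right_mono) auto
    thus "(\<alpha> ^ (k - j))\<^sup>2 \<le> \<alpha> ^ (k - j)" by (simp add: power2_eq_square)
  qed
  with S[of k] show ?thesis by linarith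
qed


lemma tail_bound:
  fixes P :: "'x::finite \<Rightarrow> 'a::finite \<Rightarrow> 'x pmf" and r :: "'x \<Rightarrow> 'a \<Rightarrow> real"
  assumes "0 \<le> \<gamma>" "\<gamma> < 1" "\<And>x a. \<bar>r x a\<bar> \<le> 1" "0 \<le> \<alpha>" "\<alpha> < 1" "0 < M"
    and k: "k \<le> K" and t: "t > 0" and \<sigma>: "\<bar>\<sigma>\<bar> = 1"
  shows "measure_pmf.prob (sample_pmf P K M) {\<omega>. t \<le> \<sigma> * mdvi_E \<alpha> \<gamma> P r M \<omega> k x a}
        \<le> exp (- t\<^sup>2 / (4 * ((1 / (1 - \<gamma>))\<^sup>2 * (1 / (1 - \<alpha>)) / (2 * real M))))"
proof -
  define H where "H = 1 / (1 - \<gamma>)"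
  define W0 where "W0 = H\<^sup>2 * (1 / (1 - \<alpha>)) / (2 * real M)"
  have Hpos: "H > 0" using assms by (simp add: H_def)
  have W0pos: "W0 > 0" using assms Hpos by (simp add: W0_def)
  define l where "l = t / (2 * W0)"
  have lpos: "l > 0" using t W0pos by (simp add: l_def)
  define p where "p = (\<lambda>(k::nat,m::nat,x::'x,a::'a). P x a)"
  define DK where "DK = {..<K} \<times> {..<M} \<times> (UNIV::'x set) \<times> (UNIV::'a set)"
  define Dk where "Dk = {..<k} \<times> {..<M} \<times> (UNIV::'x set) \<times> (UNIV::'a set)"
  define \<beta> where "\<beta> = (\<lambda>j. \<sigma> * \<alpha> ^ (k - j))"
  define Z where "Z = (\<lambda>\<omega>. \<Sum>j\<in>{1..k}. \<beta> j * mdvi_eps \<alpha> \<gamma> P r M \<omega> j x a)"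
  have Zeq: "\<sigma> * mdvi_E \<alpha> \<gamma> P r M \<omega> k x a = Z \<omega>" for \<omega>
    unfolding Z_def \<beta>_def mdvi_E_def sum_distrib_left by (simp add: mult.assoc)
  have sp: "sample_pmf P K M = Pi_pmf DK undefined p"
    unfolding sample_pmf_def DK_def p_def ..
  have sub: "Pi_pmf Dk undefined p = map_pmf (\<lambda>f i. if i \<in> Dk then f i else undefined) (Pi_pmf DK undefined p)"
    by (rule Pi_pmf_subset) (use k in \<open>auto simp: Dk_def DK_def\<close>)
  have Zloc: "Z (\<lambda>i. if i \<in> Dk then f i else undefined) = Z f" for f
    unfolding Z_def
    by (intro sum.cong refl arg_cong2[where f="(*)"] eps_local) (auto simp: Dk_def)
  define Q where "Q = l\<^sup>2 * \<gamma>\<^sup>2 * H\<^sup>2 / (2 * real M) * (\<Sum>j\<in>{1..k}. (\<beta> j)\<^sup>2)"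
  have ch: "emeasure (measure_pmf (sample_pmf P K M)) {\<omega>\<in>UNIV. t \<le> Z \<omega>}
      \<le> ennreal (exp (- l * t)) * (\<integral>\<^sup>+\<omega>. ennreal (exp (l * Z \<omega>)) * indicator UNIV \<omega> \<partial>sample_pmf P K M)"
    by (rule Chernoff_ineq_nn_integral_ge[OF lpos]) auto
  have I1: "(\<integral>\<^sup>+\<omega>. ennreal (exp (l * Z \<omega>)) * indicator UNIV \<omega> \<partial>sample_pmf P K M)
      = (\<integral>\<^sup>+\<omega>. ennreal (exp (l * Z \<omega>)) \<partial>Pi_pmf Dk undefined p)"
    unfolding sub sp nn_integral_map_pmf Zloc by simp
  have I2: "(\<integral>\<^sup>+\<omega>. ennreal (exp (l * Z \<omega>)) \<partial>Pi_pmf Dk undefined p) \<le> ennreal (exp Q)"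
    unfolding Z_def Dk_def p_def H_def Q_def by (rule mgf_bound) (use assms in auto)
  have "emeasure (measure_pmf (sample_pmf P K M)) {\<omega>\<in>UNIV. t \<le> Z \<omega>}
      \<le> ennreal (exp (- l * t)) * ennreal (exp Q)"
    by (rule order_trans[OF ch]) (unfold I1, intro mult_left_mono I2, simp)
  also have "ennreal (exp (- l * t)) * ennreal (exp Q) = ennreal (exp (- l * t + Q))"
    by (simp add: ennreal_mult[symmetric] exp_add[symmetric])
  also have "\<dots> \<le> ennreal (exp (- t\<^sup>2 / (4 * W0)))"
  proof (intro ennreal_leI exp_mono)
    have b2: "(\<Sum>j\<in>{1..k}. (\<beta> j)\<^sup>2) \<le> 1 / (1 - \<alpha>)"
    proof -
      have s2: "\<sigma>\<^sup>2 = 1" using \<sigma> by (metis power2_abs power_one)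
      have "(\<beta> j)\<^sup>2 = (\<alpha> ^ (k - j))\<^sup>2" for j
        unfolding \<beta>_def by (simp add: power_mult_distrib s2)
      thus ?thesis using geo_sq_bound[OF assms(4,5), of k] by simp
    qed
    have g2: "\<gamma>\<^sup>2 \<le> 1" using assms by (simp add: abs_square_le_1)
    have c0: "0 \<le> l\<^sup>2 * H\<^sup>2 / (2 * real M)" using assms by simp
    have "\<gamma>\<^sup>2 * (\<Sum>j\<in>{1..k}. (\<beta> j)\<^sup>2) \<le> 1 * (1 / (1 - \<alpha>))"
      using g2 b2 by (intro mult_mono sum_nonneg) auto
    hence "l\<^sup>2 * H\<^sup>2 / (2 * real M) * (\<gamma>\<^sup>2 * (\<Sum>j\<in>{1..k}. (\<beta> j)\<^sup>2)) \<le> l\<^sup>2 * H\<^sup>2 / (2 * real M) * (1 / (1 - \<alpha>))"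
      using c0 by (intro mult_left_mono) auto
    hence "l\<^sup>2 * \<gamma>\<^sup>2 * H\<^sup>2 / (2 * real M) * (\<Sum>j\<in>{1..k}. (\<beta> j)\<^sup>2) \<le> l\<^sup>2 * W0"
      by (simp add: W0_def field_simps)
    moreover have "- l * t + l\<^sup>2 * W0 = - t\<^sup>2 / (4 * W0)"
      using W0pos by (simp add: l_def power2_eq_square field_simps)
    ultimately show "- l * t + Q \<le> - t\<^sup>2 / (4 * W0)" unfolding Q_def
      by linarith
  qed
  finally have "emeasure (measure_pmf (sample_pmf P K M)) {\<omega>\<in>UNIV. t \<le> Z \<omega>} \<le> ennreal (exp (- t\<^sup>2 / (4 * W0)))" .
  hence "measure_pmf.prob (sample_pmf P K M) {\<omega>\<in>UNIV. t \<le> Z \<omega>} \<le> exp (- t\<^sup>2 / (4 * W0))"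
    by (simp add: measure_pmf.emeasure_eq_measure)
  thus ?thesis unfolding Zeq W0_def H_def by simp
qed



theorem lemma2:
  fixes P :: "'x::finite \<Rightarrow> 'a::finite \<Rightarrow> 'x pmf"
    and r :: "'x \<Rightarrow> 'a \<Rightarrow> real"
    and \<gamma> \<alpha> \<delta> :: real and K M :: nat
  assumes "0 \<le> \<gamma>" "\<gamma> < 1"
    and "\<And>x a. \<bar>r x a\<bar> \<le> 1"
    and "0 \<le> \<alpha>" "\<alpha> < 1"
    and "0 < K" "0 < M"
    and "0 < \<delta>" "\<delta> < 1"
  shows "measure_pmf.prob (sample_pmf P K M)
           {\<omega>. \<not> (\<forall>k\<in>{1..K}.
                supnorm (mdvi_E \<alpha> \<gamma> P r M \<omega> k)
                  < 3 * (1 / (1 - \<gamma>)) * sqrt ((1 / (1 - \<alpha>)) *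
                      ln (8 * real K * real (card (UNIV :: 'x set)) * real (card (UNIV :: 'a set)) / \<delta>)
                      / real M))}
         \<le> \<delta> / 4"
proof -
  define H where "H = 1 / (1 - \<gamma>)"
  define A where "A = 1 / (1 - \<alpha>)"
  define N where "N = real K * real (card (UNIV :: 'x set)) * real (card (UNIV :: 'a set))"
  define \<iota> where "\<iota> = ln (8 * real K * real (card (UNIV :: 'x set)) * real (card (UNIV :: 'a set)) / \<delta>)"
  define t where "t = 3 * (1 / (1 - \<gamma>)) * sqrt ((1 / (1 - \<alpha>)) * \<iota> / real M)"
  have Hpos: "H > 0" using assms by (simp add: H_def)
  have Apos: "A > 0" using assms by (simp add: A_def)
  have n1: "0 < K * CARD('x) * CARD('a)" using assms by (simp add: finite_UNIV_card_ge_0)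
  hence "real 1 \<le> real (K * CARD('x) * CARD('a))" by (intro of_nat_mono) linarith
  hence Npos: "N \<ge> 1" by (simp add: N_def)
  have big: "8 * N / \<delta> > 1"
  proof -
    have "8 * N / \<delta> \<ge> 8 * N" using assms Npos by (simp add: field_simps mult_left_le)
    thus ?thesis using Npos by linarith
  qed
  have iota: "\<iota> > 0" unfolding \<iota>_def using big by (simp add: N_def mult.assoc)
  have tpos: "t > 0" unfolding t_def using assms iota by simp
  have t2: "t\<^sup>2 = 9 * H\<^sup>2 * A * \<iota> / real M"
    unfolding t_def H_def A_def using assms iota
    by (simp add: power_mult_distrib real_sqrt_pow2 field_simps)
  have expi: "exp (- \<iota>) = \<delta> / (8 * N)"
    unfolding \<iota>_def using assms big Npos by (simp add: exp_minus N_def mult.assoc)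
  have each: "measure_pmf.prob (sample_pmf P K M) {\<omega>. t \<le> \<sigma> * mdvi_E \<alpha> \<gamma> P r M \<omega> k x a} \<le> \<delta> / (8 * N)"
    if "k \<in> {1..K}" "\<sigma> \<in> {1, -1}" for k x a \<sigma>
  proof -
    have "measure_pmf.prob (sample_pmf P K M) {\<omega>. t \<le> \<sigma> * mdvi_E \<alpha> \<gamma> P r M \<omega> k x a}
        \<le> exp (- t\<^sup>2 / (4 * ((1 / (1 - \<gamma>))\<^sup>2 * (1 / (1 - \<alpha>)) / (2 * real M))))"
      by (rule tail_bound) (use assms that tpos in auto)
    also have "- t\<^sup>2 / (4 * ((1 / (1 - \<gamma>))\<^sup>2 * (1 / (1 - \<alpha>)) / (2 * real M))) = - (9 / 2) * \<iota>"
      unfolding t2 H_def[symmetric] A_def[symmetric] using Hpos Apos assms by (simp add: field_simps)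
    also have "exp (- (9 / 2) * \<iota>) \<le> exp (- \<iota>)" using iota by simp
    finally show ?thesis unfolding expi .
  qed
  define I where "I = {1..K} \<times> (UNIV :: 'x set) \<times> (UNIV :: 'a set) \<times> ({1, -1} :: real set)"
  define S where "S = (\<lambda>(k, x, a, \<sigma>). {\<omega>. t \<le> \<sigma> * mdvi_E \<alpha> \<gamma> P r M \<omega> k x a})"
  have finI: "finite I" unfolding I_def by simp
  have cardI: "real (card I) = 2 * N"
    unfolding I_def N_def by (simp add: card_cartesian_product)
  have sub: "{\<omega>. \<not> (\<forall>k\<in>{1..K}. supnorm (mdvi_E \<alpha> \<gamma> P r M \<omega> k) < t)} \<subseteq> (\<Union>i\<in>I. S i)"
  proof
    fix \<omega> assume "\<omega> \<in> {\<omega>. \<not> (\<forall>k\<in>{1..K}. supnorm (mdvi_E \<alpha> \<gamma> P r M \<omega> k) < t)}"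
    then obtain k where k: "k \<in> {1..K}" and ge: "t \<le> supnorm (mdvi_E \<alpha> \<gamma> P r M \<omega> k)" by auto
    define f where "f = mdvi_E \<alpha> \<gamma> P r M \<omega> k"
    have "supnorm f \<in> range (\<lambda>(x, a). \<bar>f x a\<bar>)"
      unfolding supnorm_def by (rule Max_in) auto
    then obtain x a where xa: "supnorm f = \<bar>f x a\<bar>" by auto
    have "t \<le> \<bar>f x a\<bar>" using ge xa f_def by simp
    hence "t \<le> 1 * f x a \<or> t \<le> (-1) * f x a" by linarith
    then obtain \<sigma> where "\<sigma> \<in> ({1, -1} :: real set)" "t \<le> \<sigma> * f x a" by blast
    hence "(k, x, a, \<sigma>) \<in> I" "\<omega> \<in> S (k, x, a, \<sigma>)" using k by (auto simp: I_def S_def f_def)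
    thus "\<omega> \<in> (\<Union>i\<in>I. S i)" by blast
  qed
  have "measure_pmf.prob (sample_pmf P K M) {\<omega>. \<not> (\<forall>k\<in>{1..K}. supnorm (mdvi_E \<alpha> \<gamma> P r M \<omega> k) < t)}
      \<le> measure_pmf.prob (sample_pmf P K M) (\<Union>i\<in>I. S i)"
    by (rule measure_pmf.finite_measure_mono[OF sub]) simp
  also have "\<dots> \<le> (\<Sum>i\<in>I. measure_pmf.prob (sample_pmf P K M) (S i))"
    by (rule measure_pmf.finite_measure_subadditive_finite[OF finI]) simp
  also have "\<dots> \<le> real (card I) * (\<delta> / (8 * N))"
    by (rule sum_bounded_above) (auto simp: I_def S_def intro!: each)
  also have "\<dots> = \<delta> / 4" unfolding cardI using Npos by (simp add: field_simps)
  finally show ?thesis unfolding t_def \<iota>_def .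
qed

end
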